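(* Let $\alpha\in(0,1]$ and $a,b\in\mathbb{R}$ with $0\le a<b$. Let $f:[a,b]\to[0,\infty)$ and $g:[a,b]\to[0,1]$ be $\alpha$-fractional integrable on $[a,b]$, with $f$ decreasing. Let $$ \ell:=\frac{\alpha(b-a)}{b^\alpha-a^\alpha}\int_a^b g(t)\,d_\alpha t. $$ Then $$ \int_{b-\ell}^b f(t)\,d_\alpha t\le\int_a^b f(t)g(t)\,d_\alpha t\le\int_a^{a+\ell}f(t)\,d_\alpha t. $$
   Context: For $\alpha\in(0,1]$ and $0\le a<b$, $\int_a^b f(t)\,d_\alpha t:=\int_a^b f(t)\,t^{\alpha-1}\,dt$, and $f$ is called $\alpha$-fractional integrable on $[a,b]$ if this integral exists and is finite. *)

theory Defs
  imports "HOL-Analysis.Analysis"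
begin

definition frac_integral :: "real \<Rightarrow> (real \<Rightarrow> real) \<Rightarrow> real \<Rightarrow> real \<Rightarrow> real" where
  "frac_integral \<alpha> f a b = integral {a..b} (\<lambda>t. f t * t powr (\<alpha> - 1))"

definition frac_integrable :: "real \<Rightarrow> (real \<Rightarrow> real) \<Rightarrow> real \<Rightarrow> real \<Rightarrow> bool" where
  "frac_integrable \<alpha> f a b \<longleftrightarrow> (\<lambda>t. f t * t powr (\<alpha> - 1)) integrable_on {a..b}"

end

theory Submission
  imports Defs
begin

lemma powr_deriv:
  assumes "0 < x" "0 < (\<alpha>::real)"
  shows "((\<lambda>t. t powr \<alpha> / \<alpha>) has_real_derivative x powr (\<alpha> - 1)) (at x)"
proof -
  have "((\<lambda>t. t powr \<alpha>) has_real_derivative \<alpha> * x powr (\<alpha> - 1)) (at x)"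
    using assms by (intro derivative_eq_intros) auto
  then have "((\<lambda>t. t powr \<alpha> / \<alpha>) has_real_derivative \<alpha> * x powr (\<alpha> - 1) / \<alpha>) (at x)"
    by (rule DERIV_cdivide)
  then show ?thesis using assms by simp
qed

lemma powr_cont:
  assumes "0 \<le> c" "0 < (\<alpha>::real)"
  shows "continuous_on {c..d} (\<lambda>t. t powr \<alpha> / \<alpha>)"
  using assms by (intro continuous_on_divide continuous_on_powr' continuous_intros) auto

lemma w_int:
  assumes "0 \<le> c" "c \<le> d" "0 < (\<alpha>::real)"
  shows "((\<lambda>t. t powr (\<alpha> - 1)) has_integral (d powr \<alpha> / \<alpha> - c powr \<alpha> / \<alpha>)) {c..d}"
proof (rule fundamental_theorem_of_calculus_interior[OF assms(2)])
  show "continuous_on {c..d} (\<lambda>t. t powr \<alpha> / \<alpha>)" using powr_cont assms by auto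
  fix x assume "x \<in> {c<..<d}"
  then have "0 < x" using assms by auto
  then show "((\<lambda>t. t powr \<alpha> / \<alpha>) has_vector_derivative x powr (\<alpha> - 1)) (at x)"
    using powr_deriv[OF _ assms(3)] by (simp add: has_real_derivative_iff_has_vector_derivative)
qed

lemma chord:
  assumes "0 \<le> a" "a \<le> x" "x \<le> b" "0 < \<alpha>" "\<alpha> \<le> (1::real)"
  shows "(x - a) * (b powr \<alpha> - a powr \<alpha>) \<le> (b - a) * (x powr \<alpha> - a powr \<alpha>)"
proof (cases "a < x \<and> x < b")
  case False
  then have "x = a \<or> x = b" using assms by auto
  then show ?thesis by (auto simp: algebra_simps)
next
  case True
  define F where "F = (\<lambda>t::real. t powr \<alpha> / \<alpha>)"
  have dif: "\<And>y. 0 < y \<Longrightarrow> F differentiable (at y)"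
    unfolding F_def using powr_deriv assms real_differentiable_def by blast
  obtain l1 z1 where 1: "a < z1" "z1 < x" "DERIV F z1 :> l1" "F x - F a = (x - a) * l1"
    using MVT[of a x F] True dif powr_cont[of a \<alpha> x] assms unfolding F_def by force
  obtain l2 z2 where 2: "x < z2" "z2 < b" "DERIV F z2 :> l2" "F b - F x = (b - x) * l2"
    using MVT[of x b F] True dif powr_cont[of x \<alpha> b] assms unfolding F_def by force
  have l1: "l1 = z1 powr (\<alpha> - 1)"
    using DERIV_unique[OF 1(3)] powr_deriv[of z1 \<alpha>] 1 assms unfolding F_def by auto
  have l2: "l2 = z2 powr (\<alpha> - 1)"
    using DERIV_unique[OF 2(3)] powr_deriv[of z2 \<alpha>] 2 assms True unfolding F_def by auto
  have "l2 \<le> l1" unfolding l1 l2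
    using 1 2 assms by (intro powr_mono2') auto
  then have "(F b - F x) * (x - a) \<le> (F x - F a) * (b - x)"
  proof -
    have "(F b - F x) * (x - a) = (b - x) * (x - a) * l2" using 2 by simp
    also have "\<dots> \<le> (b - x) * (x - a) * l1" using True \<open>l2 \<le> l1\<close> by (intro mult_left_mono) auto
    also have "\<dots> = (F x - F a) * (b - x)" using 1 by simp
    finally show ?thesis .
  qed
  then have "(x - a) * (F b - F a) \<le> (b - a) * (F x - F a)"
    by (simp add: algebra_simps)
  then have "(x - a) * (b powr \<alpha> - a powr \<alpha>) / \<alpha> \<le> (b - a) * (x powr \<alpha> - a powr \<alpha>) / \<alpha>"
    unfolding F_def by (simp add: diff_divide_distrib[symmetric])
  then show ?thesis using assms by (simp add: divide_le_cancel)
qed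

theorem mainTheorem5:
  fixes \<alpha> a b :: real and f g :: "real \<Rightarrow> real"
  assumes "0 < \<alpha>" "\<alpha> \<le> 1" "0 \<le> a" "a < b"
    and "\<And>t. t \<in> {a..b} \<Longrightarrow> 0 \<le> f t"
    and "\<And>t. t \<in> {a..b} \<Longrightarrow> 0 \<le> g t \<and> g t \<le> 1"
    and "frac_integrable \<alpha> f a b" and "frac_integrable \<alpha> g a b"
    and "\<And>x y. x \<in> {a..b} \<Longrightarrow> y \<in> {a..b} \<Longrightarrow> x \<le> y \<Longrightarrow> f y \<le> f x"
  defines "l \<equiv> \<alpha> * (b - a) / (b powr \<alpha> - a powr \<alpha>) * frac_integral \<alpha> g a b"
  shows "frac_integral \<alpha> f (b - l) b \<le> frac_integral \<alpha> (\<lambda>t. f t * g t) a b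
       \<and> frac_integral \<alpha> (\<lambda>t. f t * g t) a b \<le> frac_integral \<alpha> f a (a + l)"
proof -
  define w where "w = (\<lambda>t::real. t powr (\<alpha> - 1))"
  define F where "F = (\<lambda>t. f t * w t)"
  define Gw where "Gw = (\<lambda>t. g t * w t)"
  define H where "H = (\<lambda>t. (f t * g t) * w t)"
  have w0: "\<And>t. 0 \<le> w t" unfolding w_def by simp
  have iF: "F integrable_on {a..b}" using assms(7) unfolding frac_integrable_def F_def w_def .
  have iG: "Gw integrable_on {a..b}" using assms(8) unfolding frac_integrable_def Gw_def w_def .
  have Gw0: "\<And>t. t \<in> {a..b} \<Longrightarrow> 0 \<le> Gw t" unfolding Gw_def using assms(6) w0 by auto
  have iH: "H integrable_on {a..b}"
  proof -
    have aG: "Gw absolutely_integrable_on {a..b}"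
      by (rule nonnegative_absolutely_integrable_1[OF iG Gw0])
    have mon: "mono_on {a..b} (\<lambda>t. - f t)"
      using assms(9) by (auto simp: mono_on_def)
    have "(\<lambda>t. - f t) \<in> borel_measurable (lebesgue_on {a..b})"
    proof -
      have "space lborel = space lebesgue" "sets borel \<subseteq> sets lebesgue"
        by force+
      then show ?thesis
        by (metis mon borel_measurable_mono_on_fnc borel_measurable_subalgebra mono_restrict_space space_lborel space_restrict_space)
    qed
    then have fm: "f \<in> borel_measurable (lebesgue_on {a..b})"
      using borel_measurable_uminus[of "\<lambda>t. - f t"] by simp
    have "f ` {a..b} \<subseteq> {0..f a}"
      using assms(4,5,9) by (auto intro!: assms(9))
    then have bd: "bounded (f ` {a..b})" by (meson bounded_closed_interval bounded_subset)
    have "(\<lambda>t. f t * Gw t) absolutely_integrable_on {a..b}"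
      by (rule absolutely_integrable_bounded_measurable_product_real[OF fm _ bd aG]) simp
    then have "(\<lambda>t. f t * Gw t) integrable_on {a..b}"
      using absolutely_integrable_on_def by blast
    then show ?thesis unfolding H_def Gw_def by (simp add: mult.assoc)
  qed
  have sub: "\<And>(h::real\<Rightarrow>real) c d. h integrable_on {a..b} \<Longrightarrow> a \<le> c \<Longrightarrow> d \<le> b \<Longrightarrow> h integrable_on {c..d}"
    by (erule integrable_subinterval_real) auto
  have wint: "\<And>c d. 0 \<le> c \<Longrightarrow> c \<le> d \<Longrightarrow> integral {c..d} w = d powr \<alpha> / \<alpha> - c powr \<alpha> / \<alpha>"
    unfolding w_def using w_int assms(1) by (blast intro: integral_unique)
  have wi: "\<And>c d. 0 \<le> c \<Longrightarrow> c \<le> d \<Longrightarrow> w integrable_on {c..d}"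
    unfolding w_def using w_int assms(1) by blast
  define W where "W = b powr \<alpha> - a powr \<alpha>"
  have Wpos: "0 < W" unfolding W_def using assms(1,3,4) by (simp add: powr_less_mono2)
  define G where "G = integral {a..b} Gw"
  have G0: "0 \<le> G" unfolding G_def using Gw0 by (rule integral_nonneg[OF iG])
  have "G \<le> integral {a..b} w"
    unfolding G_def by (rule integral_le[OF iG wi]) (use assms w0 in \<open>auto simp: Gw_def intro: mult_left_le_one_le\<close>)
  then have GW: "\<alpha> * G \<le> W" using wint[of a b] assms(1,3,4) unfolding W_def
    by (simp add: pos_le_divide_eq diff_divide_distrib[symmetric] mult.commute)
  have l_eq: "l = \<alpha> * (b - a) / W * G" unfolding l_def W_def G_def frac_integral_def Gw_def w_def by simp
  have l0: "0 \<le> l" unfolding l_eq using assms(1,4) Wpos G0 by simp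
  have lW: "l * W = \<alpha> * (b - a) * G" unfolding l_eq using Wpos by simp
  have lb: "l \<le> b - a"
  proof -
    have "l * W \<le> (b - a) * W" unfolding lW using GW assms(4)
      by (metis mult.assoc mult.commute mult_left_mono diff_ge_0_iff_ge less_eq_real_def)
    then show ?thesis using Wpos by simp
  qed
  define L where "L = a + l"
  define M where "M = b - l"
  have L: "a \<le> L" "L \<le> b" unfolding L_def using l0 lb by auto
  have M: "a \<le> M" "M \<le> b" unfolding M_def using l0 lb by auto
  have key1: "G \<le> integral {a..L} w"
  proof -
    have "(L - a) * W \<le> (b - a) * (L powr \<alpha> - a powr \<alpha>)"
      unfolding W_def by (rule chord) (use assms L in auto)
    then have "(b - a) * (\<alpha> * G) \<le> (b - a) * (L powr \<alpha> - a powr \<alpha>)"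
      using lW unfolding L_def by (simp add: algebra_simps)
    then have "\<alpha> * G \<le> L powr \<alpha> - a powr \<alpha>" using assms(4) by simp
    then show ?thesis using wint[of a L] L assms(1,3)
      by (simp add: pos_le_divide_eq diff_divide_distrib[symmetric] mult.commute)
  qed
  have key2: "integral {M..b} w \<le> G"
  proof -
    have "(M - a) * W \<le> (b - a) * (M powr \<alpha> - a powr \<alpha>)"
      unfolding W_def by (rule chord) (use assms M in auto)
    then have "(b - a) * W - (b - a) * (\<alpha> * G) \<le> (b - a) * (M powr \<alpha> - a powr \<alpha>)"
      using lW unfolding M_def by (simp add: algebra_simps)
    then have "(b - a) * (b powr \<alpha> - M powr \<alpha>) \<le> (b - a) * (\<alpha> * G)"
      unfolding W_def by (simp add: algebra_simps)
    then have "b powr \<alpha> - M powr \<alpha> \<le> \<alpha> * G" using assms(4) by simp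
    then show ?thesis using wint[of M b] M assms(1,3)
      by (simp add: pos_divide_le_eq diff_divide_distrib[symmetric] mult.commute)
  qed
  have fL: "0 \<le> f L" using assms(5) L by auto
  have fM: "0 \<le> f M" using assms(5) M by auto
  have upper: "integral {a..b} H \<le> integral {a..L} F"
  proof -
    have s1: "integral {a..b} H = integral {a..L} H + integral {L..b} H"
      using Henstock_Kurzweil_Integration.integral_combine[OF L iH] by simp
    have sG: "G = integral {a..L} Gw + integral {L..b} Gw"
      unfolding G_def using Henstock_Kurzweil_Integration.integral_combine[OF L iG] by simp
    have "integral {L..b} H \<le> integral {L..b} (\<lambda>t. f L * Gw t)"
    proof (rule integral_le)
      show "H integrable_on {L..b}" by (rule sub[OF iH]) (use L in auto)
      show "(\<lambda>t. f L * Gw t) integrable_on {L..b}"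
        by (intro integrable_on_mult_right sub[OF iG]) (use L in auto)
      fix t assume t: "t \<in> {L..b}"
      then have "f t \<le> f L" using L by (intro assms(9)) auto
      moreover have "0 \<le> Gw t" using t L Gw0 by auto
      ultimately show "H t \<le> f L * Gw t" unfolding H_def Gw_def
        by (simp add: mult.assoc mult_right_mono)
    qed
    then have A: "integral {L..b} H \<le> f L * integral {L..b} Gw" by simp
    have iH': "H integrable_on {a..L}" by (rule sub[OF iH]) (use L in auto)
    have iG': "Gw integrable_on {a..L}" by (rule sub[OF iG]) (use L in auto)
    have iw': "w integrable_on {a..L}" using wi L assms(3) by auto
    have iF': "F integrable_on {a..L}" by (rule sub[OF iF]) (use L in auto)
    have "integral {a..L} (\<lambda>t. H t + f L * (w t - Gw t)) \<le> integral {a..L} F"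
    proof (rule integral_le)
      show "(\<lambda>t. H t + f L * (w t - Gw t)) integrable_on {a..L}"
        by (intro integrable_add integrable_on_mult_right integrable_diff iH' iG' iw')
      show "F integrable_on {a..L}" by (rule iF')
      fix t assume t: "t \<in> {a..L}"
      then have "f L \<le> f t" using L by (intro assms(9)) auto
      moreover have "0 \<le> (1 - g t) * w t" using t L assms(6)[of t] w0[of t] by auto
      ultimately have "f L * ((1 - g t) * w t) \<le> f t * ((1 - g t) * w t)"
        by (rule mult_right_mono)
      then show "H t + f L * (w t - Gw t) \<le> F t" unfolding H_def Gw_def F_def
        by (simp add: algebra_simps)
    qed
    moreover have "integral {a..L} (\<lambda>t. H t + f L * (w t - Gw t)) = integral {a..L} H + f L * (integral {a..L} w - integral {a..L} Gw)"
    proof -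
      have "integral {a..L} (\<lambda>t. H t + f L * (w t - Gw t)) = integral {a..L} H + integral {a..L} (\<lambda>t. f L * (w t - Gw t))"
        by (intro integral_add iH' integrable_on_mult_right integrable_diff iw' iG')
      also have "\<dots> = integral {a..L} H + f L * integral {a..L} (\<lambda>t. w t - Gw t)" by simp
      also have "\<dots> = integral {a..L} H + f L * (integral {a..L} w - integral {a..L} Gw)"
        using integral_diff[OF iw' iG'] by simp
      finally show ?thesis .
    qed
    ultimately have B: "integral {a..L} H + f L * (integral {a..L} w - integral {a..L} Gw) \<le> integral {a..L} F"
      by simp
    have "f L * G \<le> f L * integral {a..L} w" using key1 fL by (rule mult_left_mono)
    then show ?thesis using s1 sG A B by (simp add: algebra_simps)
  qed
  have lower: "integral {M..b} F \<le> integral {a..b} H"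
  proof -
    have s1: "integral {a..b} H = integral {a..M} H + integral {M..b} H"
      using Henstock_Kurzweil_Integration.integral_combine[OF M iH] by simp
    have sG: "G = integral {a..M} Gw + integral {M..b} Gw"
      unfolding G_def using Henstock_Kurzweil_Integration.integral_combine[OF M iG] by simp
    have "integral {a..M} (\<lambda>t. f M * Gw t) \<le> integral {a..M} H"
    proof (rule integral_le)
      show "H integrable_on {a..M}" by (rule sub[OF iH]) (use M in auto)
      show "(\<lambda>t. f M * Gw t) integrable_on {a..M}"
        by (intro integrable_on_mult_right sub[OF iG]) (use M in auto)
      fix t assume t: "t \<in> {a..M}"
      then have "f M \<le> f t" using M by (intro assms(9)) auto
      moreover have "0 \<le> Gw t" using t M Gw0 by auto
      ultimately show "f M * Gw t \<le> H t" unfolding H_def Gw_def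
        by (simp add: mult.assoc mult_right_mono)
    qed
    then have A: "f M * integral {a..M} Gw \<le> integral {a..M} H" by simp
    have iH': "H integrable_on {M..b}" by (rule sub[OF iH]) (use M in auto)
    have iG': "Gw integrable_on {M..b}" by (rule sub[OF iG]) (use M in auto)
    have iw': "w integrable_on {M..b}" using wi M assms(3) by auto
    have iF': "F integrable_on {M..b}" by (rule sub[OF iF]) (use M in auto)
    have "integral {M..b} F \<le> integral {M..b} (\<lambda>t. H t + f M * (w t - Gw t))"
    proof (rule integral_le)
      show "(\<lambda>t. H t + f M * (w t - Gw t)) integrable_on {M..b}"
        by (intro integrable_add integrable_on_mult_right integrable_diff iH' iG' iw')
      show "F integrable_on {M..b}" by (rule iF')
      fix t assume t: "t \<in> {M..b}"
      then have "f t \<le> f M" using M by (intro assms(9)) auto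
      moreover have "0 \<le> (1 - g t) * w t" using t M assms(6)[of t] w0[of t] by auto
      ultimately have "f t * ((1 - g t) * w t) \<le> f M * ((1 - g t) * w t)"
        by (rule mult_right_mono)
      then show "F t \<le> H t + f M * (w t - Gw t)" unfolding H_def Gw_def F_def
        by (simp add: algebra_simps)
    qed
    moreover have "integral {M..b} (\<lambda>t. H t + f M * (w t - Gw t)) = integral {M..b} H + f M * (integral {M..b} w - integral {M..b} Gw)"
    proof -
      have "integral {M..b} (\<lambda>t. H t + f M * (w t - Gw t)) = integral {M..b} H + integral {M..b} (\<lambda>t. f M * (w t - Gw t))"
        by (intro integral_add iH' integrable_on_mult_right integrable_diff iw' iG')
      also have "\<dots> = integral {M..b} H + f M * integral {M..b} (\<lambda>t. w t - Gw t)" by simp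
      also have "\<dots> = integral {M..b} H + f M * (integral {M..b} w - integral {M..b} Gw)"
        using integral_diff[OF iw' iG'] by simp
      finally show ?thesis .
    qed
    ultimately have B: "integral {M..b} F \<le> integral {M..b} H + f M * (integral {M..b} w - integral {M..b} Gw)"
      by simp
    have "f M * integral {M..b} w \<le> f M * G" using key2 fM by (rule mult_left_mono)
    then show ?thesis using s1 sG A B by (simp add: algebra_simps)
  qed
  show ?thesis
    using upper lower unfolding frac_integral_def L_def M_def H_def F_def w_def by simp
qed

end
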